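(* Let $n\ge3$, let the sites of an $n$-qubit chain be partitioned as $L=\{1,\dots,a\}$, $C=\{a+1\}$, $R=\{a+2,\dots,n\}$ with $L,R$ nonempty, and let $W\in\mathrm{Sp}(2n,\mathbb{Z}_2)$ be the symplectic matrix of a Clifford unitary that is an irreducible $1$-wall around $C$. Then $G_{\mathrm{left}}=G_{\mathrm{right}}$, and this subspace has dimension $1$; i.e. it corresponds to the group $\{\mathbb{1},\sigma\}$ generated by a single traceless single-qubit Pauli matrix $\sigma$ on site $a+1$.
   Context: Pauli operators modulo phases are identified with $\mathbb{Z}_2^{2n}$ via $(p_1,q_1,\dots,p_n,q_n)\mapsto X^{p_1}Z^{q_1}\otimes\cdots\otimes X^{p_n}Z^{q_n}$; symplectic form $J=\bigoplus_{i=1}^n\begin{pmatrix}0&1\\1&0\end{pmatrix}$; $\mathrm{Sp}(2n,\mathbb{Z}_2)=\{S:SJS^T=J\}$. $V_S$ denotes vectors supported on the site set $S$, $\mathbb{Z}_2^{2n}=V_L\oplus V_C\oplus V_R$, vectors $(l,c,r)$, $\pi_C$ the projection onto $V_C$. Left wall condition around $C$: for all $t\ge1$, $l\in V_L$: $W^t(l,0,0)\in V_L\oplus V_C\oplus\{0\}$. $W$ is an irreducible $1$-wall around $C$ if it satisfies the left wall condition around $C$ and contains no smaller wall, i.e. neither $W^t V_L\subseteq V_L$ for all $t\ge1$ nor $W^t(V_L\oplus V_C)\subseteq V_L\oplus V_C$ for all $t\ge1$. Internal subspaces: $G_{\mathrm{left}}=\pi_C(\mathrm{span}\{W^t(l,0,0):t\ge0,l\in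 V_L\})$, $G_{\mathrm{right}}=\pi_C(\mathrm{span}\{W^t(0,0,r):t\ge0,r\in V_R\})$. *)

theory Defs
  imports "HOL.Vector_Spaces" "HOL-Library.Z2" "HOL-Library.Function_Algebras"
begin

text \<open>Phase-space vectors of n qubits: Z_2^{2n}, represented as functions
  nat => bit that vanish outside the index range 0..<2n.  Coordinate 2(i-1)
  is the X-exponent p_i and coordinate 2(i-1)+1 the Z-exponent q_i of site i
  (sites are numbered 1..n).  Matrices are nat => nat => bit, entries with an
  index outside 0..<2n are irrelevant (and required to be 0 for Sp).\<close>

type_synonym pvec = "nat \<Rightarrow> bit"
type_synonym pmat = "nat \<Rightarrow> nat \<Rightarrow> bit"

definition site :: "nat \<Rightarrow> nat" where
  "site k = k div 2 + 1"

definition scaleZ2 :: "bit \<Rightarrow> pvec \<Rightarrow> pvec" where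
  "scaleZ2 c v = (\<lambda>k. c * v k)"

definition mat_vec :: "nat \<Rightarrow> pmat \<Rightarrow> pvec \<Rightarrow> pvec" where
  "mat_vec n W v = (\<lambda>i. if i < 2*n then (\<Sum>j<2*n. W i j * v j) else 0)"

definition mat_pow_vec :: "nat \<Rightarrow> pmat \<Rightarrow> nat \<Rightarrow> pvec \<Rightarrow> pvec" where
  "mat_pow_vec n W t = (mat_vec n W ^^ t)"

text \<open>The symplectic form J = direct sum of n copies of [[0,1],[1,0]].\<close>
definition Jform :: "nat \<Rightarrow> pmat" where
  "Jform n = (\<lambda>i j. if i < 2*n \<and> j < 2*n \<and> i div 2 = j div 2 \<and> i \<noteq> j then 1 else 0)"

definition symplectic :: "nat \<Rightarrow> pmat \<Rightarrow> bool" where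
  "symplectic n S \<longleftrightarrow>
     (\<forall>i j. \<not> (i < 2*n \<and> j < 2*n) \<longrightarrow> S i j = 0) \<and>
     (\<forall>i<2*n. \<forall>j<2*n.
        (\<Sum>k<2*n. \<Sum>l<2*n. S i k * Jform n k l * S j l) = Jform n i j)"

definition Vsites :: "nat \<Rightarrow> nat set \<Rightarrow> pvec set" where
  "Vsites n S = {v. \<forall>k. (k < 2*n \<and> site k \<in> S) \<or> v k = 0}"

definition proj_sites :: "nat \<Rightarrow> nat set \<Rightarrow> pvec \<Rightarrow> pvec" where
  "proj_sites n S v = (\<lambda>k. if k < 2*n \<and> site k \<in> S then v k else 0)"

definition left_wall :: "nat \<Rightarrow> pmat \<Rightarrow> nat set \<Rightarrow> nat set \<Rightarrow> bool" where
  "left_wall n W L C \<longleftrightarrow>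
     (\<forall>t\<ge>1. \<forall>l\<in>Vsites n L. mat_pow_vec n W t l \<in> Vsites n (L \<union> C))"

definition irreducible_1_wall :: "nat \<Rightarrow> pmat \<Rightarrow> nat set \<Rightarrow> nat set \<Rightarrow> bool" where
  "irreducible_1_wall n W L C \<longleftrightarrow>
     left_wall n W L C \<and>
     \<not> (\<forall>t\<ge>1. mat_pow_vec n W t ` Vsites n L \<subseteq> Vsites n L) \<and>
     \<not> (\<forall>t\<ge>1. mat_pow_vec n W t ` Vsites n (L \<union> C) \<subseteq> Vsites n (L \<union> C))"

definition G_internal :: "nat \<Rightarrow> pmat \<Rightarrow> nat set \<Rightarrow> nat set \<Rightarrow> pvec set" where
  "G_internal n W S C =
     proj_sites n C ` module.span scaleZ2
        {mat_pow_vec n W t v | t v. v \<in> Vsites n S}"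

end

theory Submission
  imports Defs
begin


declare add_bit_eq_xor[simp del] mult_bit_eq_and[simp del]

lemma scaleZ2_vs: "vector_space scaleZ2"
  by unfold_locales (auto simp: scaleZ2_def fun_eq_iff algebra_simps)

interpretation Z: vector_space scaleZ2 by (rule scaleZ2_vs)

lemma scale01: "scaleZ2 c v = (if c = 0 then 0 else v)"
  by (cases c) (auto simp: scaleZ2_def fun_eq_iff)

lemma bit_add_self[simp]: "(x::bit) + x = 0"
  by (cases x) auto

lemma fun_add_self[simp]: "(v::pvec) + v = 0"
  by (auto simp: fun_eq_iff)

lemma subspaceI2:
  assumes "0 \<in> S" "\<And>x y. x \<in> S \<Longrightarrow> y \<in> S \<Longrightarrow> x + y \<in> S"
  shows "Z.subspace S"
  using assms by (auto simp: Z.subspace_def scale01)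

lemma mat_vec_add: "mat_vec n W (x + y) = mat_vec n W x + mat_vec n W y"
  by (rule ext) (simp add: mat_vec_def sum.distrib distrib_left)

lemma mat_vec_zero[simp]: "mat_vec n W 0 = 0"
  by (auto simp: mat_vec_def fun_eq_iff)

lemma mat_pow_add: "mat_pow_vec n W t (x + y) = mat_pow_vec n W t x + mat_pow_vec n W t y"
  by (induct t) (simp_all only: mat_pow_vec_def funpow.simps comp_apply id_apply mat_vec_add)

lemma mat_pow_zero[simp]: "mat_pow_vec n W t 0 = 0"
  by (induct t) (simp_all only: mat_pow_vec_def funpow.simps comp_apply id_apply mat_vec_zero)

lemma mat_pow_0[simp]: "mat_pow_vec n W 0 v = v"
  by (simp add: mat_pow_vec_def)

lemma mat_pow_Suc: "mat_pow_vec n W (Suc t) v = mat_vec n W (mat_pow_vec n W t v)"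
  by (simp add: mat_pow_vec_def)

lemma mat_pow_Suc': "mat_pow_vec n W (Suc t) v = mat_pow_vec n W t (mat_vec n W v)"
  by (simp add: mat_pow_vec_def funpow_Suc_right del: funpow.simps)

lemma proj_add: "proj_sites n C (x + y) = proj_sites n C x + proj_sites n C y"
  by (auto simp: proj_sites_def fun_eq_iff)

lemma proj_zero[simp]: "proj_sites n C 0 = 0"
  by (auto simp: proj_sites_def fun_eq_iff)

lemma Vsites_iff: "v \<in> Vsites n S \<longleftrightarrow> (\<forall>k. v k \<noteq> 0 \<longrightarrow> k < 2*n \<and> site k \<in> S)"
  by (auto simp: Vsites_def)

lemma Vsites_subspace: "Z.subspace (Vsites n S)"
  apply (rule subspaceI2)
   apply (simp add: Vsites_def)
  apply (simp add: Vsites_def)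
  by (metis add.right_neutral)

lemma Vsites_mono: "S \<subseteq> T \<Longrightarrow> Vsites n S \<subseteq> Vsites n T"
  by (auto simp: Vsites_def)

lemma span_in_subspace:
  assumes "X \<subseteq> T" "Z.subspace T" shows "Z.span X \<subseteq> T"
  using assms Z.span_minimal by blast



definition pt :: "nat \<Rightarrow> nat" where "pt k = (if even k then Suc k else k - 1)"
definition om :: "nat \<Rightarrow> pvec \<Rightarrow> pvec \<Rightarrow> bit" where
  "om n x y = (\<Sum>k<2*n. x k * y (pt k))"
definition Fn :: "nat \<Rightarrow> pvec set" where "Fn n = {v. \<forall>k\<ge>2*n. v k = 0}"
definition Wst :: "pmat \<Rightarrow> pmat" where "Wst W i j = W (pt j) (pt i)"

lemma pt_lt: "k < 2*n \<Longrightarrow> pt k < 2*n"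
  unfolding pt_def by presburger

lemma pt_pt[simp]: "pt (pt k) = k"
  unfolding pt_def by presburger

lemma pt_eq_iff[simp]: "pt i = pt j \<longleftrightarrow> i = j"
  by (metis pt_pt)

lemma site_pt[simp]: "site (pt k) = site k"
  unfolding pt_def site_def by presburger

lemma pt_bij: "bij_betw pt {..<2*n} {..<2*n}"
  by (rule bij_betw_byWitness[of _ pt]) (auto simp: pt_lt)

lemma div2_iff: "(j::nat) div 2 = q \<longleftrightarrow> (j = 2*q \<or> j = 2*q+1)"
  by presburger

lemma pt_iff: "(i div 2 = j div 2 \<and> i \<noteq> j) \<longleftrightarrow> j = pt (i::nat)"
proof (cases "even i")
  case True
  then obtain q where q: "i = 2*q" by blast
  then show ?thesis using div2_iff[of j q] by (auto simp: pt_def)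
next
  case False
  then obtain q where q: "i = 2*q+1" using oddE by blast
  then show ?thesis using div2_iff[of j q] by (auto simp: pt_def)
qed

lemma J_eq: "i < 2*n \<Longrightarrow> j < 2*n \<Longrightarrow> Jform n i j = (if j = pt i then 1 else 0)"
  unfolding Jform_def using pt_iff[of i j] by simp

lemma sum_single: "m < (N::nat) \<Longrightarrow> (\<Sum>l<N. (if l = m then f l else 0)) = (f m :: bit)"
  using sum.delta[of "{..<N}" m f] by simp

lemma symp_row:
  assumes S: "symplectic n W" and i: "i < 2*n" and j: "j < 2*n"
  shows "(\<Sum>k<2*n. W i k * W j (pt k)) = (if j = pt i then 1 else 0)"
proof -
  have "(\<Sum>k<2*n. W i k * W j (pt k)) = (\<Sum>k<2*n. \<Sum>l<2*n. W i k * Jform n k l * W j l)"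
  proof (rule sum.cong[OF refl])
    fix k assume k: "k \<in> {..<2*n}"
    have "(\<Sum>l<2*n. W i k * Jform n k l * W j l) = (\<Sum>l<2*n. (if l = pt k then W i k * W j l else 0))"
      by (rule sum.cong[OF refl]) (use k in \<open>auto simp: J_eq\<close>)
    also have "\<dots> = W i k * W j (pt k)" using k pt_lt by (intro sum_single) auto
    finally show "W i k * W j (pt k) = (\<Sum>l<2*n. W i k * Jform n k l * W j l)" by simp
  qed
  also have "\<dots> = Jform n i j" using S i j by (auto simp: symplectic_def)
  also have "\<dots> = (if j = pt i then 1 else 0)" using i j by (simp add: J_eq)
  finally show ?thesis .
qed

lemma bit_UNIV: "(UNIV :: bit set) = {0, 1}"
  using bit_not_zero_iff by blast

lemma Fn_finite: "finite (Fn n)"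
proof -
  let ?f = "\<lambda>xs k. if k < 2*n then xs ! k else (0::bit)"
  have "Fn n \<subseteq> ?f ` {xs. set xs \<subseteq> UNIV \<and> length xs = 2*n}"
  proof
    fix v assume v: "v \<in> Fn n"
    have "v = ?f (map v [0..<2*n])"
      using v by (auto simp: Fn_def fun_eq_iff)
    then show "v \<in> ?f ` {xs. set xs \<subseteq> UNIV \<and> length xs = 2*n}" by force
  qed
  moreover have "finite {xs. set xs \<subseteq> (UNIV::bit set) \<and> length xs = 2*n}"
    by (rule finite_lists_length_eq) (simp add: bit_UNIV)
  ultimately show ?thesis by (meson finite_surj)
qed

lemma mat_vec_Fn: "mat_vec n W v \<in> Fn n"
  by (simp add: mat_vec_def Fn_def)

lemma right_inv:
  assumes S: "symplectic n W" and v: "v \<in> Fn n"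
  shows "mat_vec n W (mat_vec n (Wst W) v) = v"
proof (rule ext)
  fix i
  show "mat_vec n W (mat_vec n (Wst W) v) i = v i"
  proof (cases "i < 2*n")
    case False then show ?thesis using v by (simp add: mat_vec_def Fn_def)
  next
    case i: True
    have "mat_vec n W (mat_vec n (Wst W) v) i = (\<Sum>j<2*n. W i j * (\<Sum>m<2*n. Wst W j m * v m))"
      using i by (simp add: mat_vec_def)
    also have "\<dots> = (\<Sum>j<2*n. \<Sum>m<2*n. W i j * (W (pt m) (pt j) * v m))"
      by (simp add: sum_distrib_left Wst_def)
    also have "\<dots> = (\<Sum>m<2*n. \<Sum>j<2*n. W i j * (W (pt m) (pt j) * v m))"
      by (rule sum.swap)
    also have "\<dots> = (\<Sum>m<2*n. (\<Sum>j<2*n. W i j * W (pt m) (pt j)) * v m)"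
      by (simp add: sum_distrib_right mult.assoc)
    also have "\<dots> = (\<Sum>m<2*n. (if m = i then v m else 0))"
      by (rule sum.cong[OF refl]) (use i in \<open>auto simp: symp_row[OF S] pt_lt\<close>)
    also have "\<dots> = v i" using i by (rule sum_single)
    finally show ?thesis .
  qed
qed

lemma adjoint:
  "om n (mat_vec n W x) y = om n x (mat_vec n (Wst W) y)"
proof -
  have "om n (mat_vec n W x) y = (\<Sum>k<2*n. (\<Sum>j<2*n. W k j * x j) * y (pt k))"
    by (simp add: om_def mat_vec_def)
  also have "\<dots> = (\<Sum>k<2*n. \<Sum>j<2*n. x j * (W k j * y (pt k)))"
    by (intro sum.cong refl) (simp add: sum_distrib_left mult_ac)
  also have "\<dots> = (\<Sum>j<2*n. \<Sum>k<2*n. x j * (W k j * y (pt k)))"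
    by (rule sum.swap)
  also have "\<dots> = (\<Sum>j<2*n. x j * (\<Sum>k<2*n. W k j * y (pt k)))"
    by (simp add: sum_distrib_left)
  also have "\<dots> = (\<Sum>j<2*n. x j * (\<Sum>m<2*n. W (pt m) j * y m))"
  proof (rule sum.cong[OF refl])
    fix j
    have "(\<Sum>k<2*n. W k j * y (pt k)) = (\<Sum>m<2*n. W (pt m) j * y m)"
      using sum.reindex_bij_betw[OF pt_bij[of n], of "\<lambda>m. W (pt m) j * y m"] by simp
    then show "x j * (\<Sum>k<2*n. W k j * y (pt k)) = x j * (\<Sum>m<2*n. W (pt m) j * y m)" by simp
  qed
  also have "\<dots> = om n x (mat_vec n (Wst W) y)"
    by (simp add: om_def mat_vec_def Wst_def pt_lt)
  finally show ?thesis .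
qed

lemma Mv_inj:
  assumes S: "symplectic n W"
  shows "inj_on (mat_vec n W) (Fn n)"
proof -
  have sub: "Fn n \<subseteq> mat_vec n W ` Fn n"
  proof
    fix v assume v: "v \<in> Fn n"
    have "v = mat_vec n W (mat_vec n (Wst W) v)" using right_inv[OF S v] by simp
    moreover have "mat_vec n (Wst W) v \<in> Fn n" by (rule mat_vec_Fn)
    ultimately show "v \<in> mat_vec n W ` Fn n" by (rule image_eqI)
  qed
  have sub2: "mat_vec n W ` Fn n \<subseteq> Fn n" using mat_vec_Fn by blast
  have eq: "mat_vec n W ` Fn n = Fn n" using sub sub2 by (rule equalityI[rotated])
  have "card (mat_vec n W ` Fn n) = card (Fn n)" by (simp only: eq)
  then show ?thesis by (rule eq_card_imp_inj_on[OF Fn_finite])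
qed

lemma left_inv:
  assumes S: "symplectic n W" and v: "v \<in> Fn n"
  shows "mat_vec n (Wst W) (mat_vec n W v) = v"
  by (rule inj_onD[OF Mv_inj[OF S]]) (simp_all add: right_inv[OF S mat_vec_Fn] mat_vec_Fn v)

lemma om_inv:
  assumes S: "symplectic n W" and y: "y \<in> Fn n"
  shows "om n (mat_vec n W x) (mat_vec n W y) = om n x y"
  by (simp add: adjoint left_inv[OF S y])



definition ev :: "nat \<Rightarrow> pvec" where "ev m = (\<lambda>k. if k = m then 1 else 0)"
definition perp :: "nat \<Rightarrow> pvec set \<Rightarrow> pvec set" where
  "perp n X = {x \<in> Fn n. \<forall>y\<in>X. om n x y = 0}"
definition mk :: "nat \<Rightarrow> bit \<Rightarrow> bit \<Rightarrow> pvec" where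
  "mk a x y = (\<lambda>k. if k = 2*a then x else if k = 2*a+1 then y else 0)"

lemma om_add1: "om n (x + y) z = om n x z + om n y z"
  by (simp add: om_def sum.distrib distrib_right)

lemma om_zero1[simp]: "om n 0 z = 0"
  by (simp add: om_def)

lemma om_e: "m < 2*n \<Longrightarrow> om n x (ev m) = x (pt m)"
proof -
  assume m: "m < 2*n"
  have "om n x (ev m) = (\<Sum>k<2*n. (if k = pt m then x k else 0))"
    unfolding om_def ev_def by (rule sum.cong[OF refl]) auto
  also have "\<dots> = x (pt m)" using m pt_lt by (intro sum_single) auto
  finally show ?thesis .
qed

lemma ev_in: "m < 2*n \<Longrightarrow> site m \<in> S \<Longrightarrow> ev m \<in> Vsites n S"
  by (auto simp: Vsites_def ev_def)

lemma om_disj: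
  assumes x: "x \<in> Vsites n S" and y: "y \<in> Vsites n T" and d: "S \<inter> T = {}"
  shows "om n x y = 0"
  unfolding om_def
proof (rule sum.neutral, rule ballI)
  fix k
  show "x k * y (pt k) = 0"
  proof (cases "x k = 0")
    case False
    then have "site k \<in> S" using x by (auto simp: Vsites_def)
    moreover have "y (pt k) \<noteq> 0 \<Longrightarrow> site (pt k) \<in> T" using y unfolding Vsites_iff by blast
    ultimately have "y (pt k) = 0" using d by auto
    then show ?thesis by simp
  qed simp
qed

lemma Vsites_Fn: "Vsites n S \<subseteq> Fn n"
  unfolding Vsites_def Fn_def using not_less by blast

lemma Fn_subspace: "Z.subspace (Fn n)"
  by (rule subspaceI2) (auto simp: Fn_def)

lemma zero_Fn[simp]: "0 \<in> Fn n"
  by (simp add: Fn_def)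

lemma perp_subspace: "Z.subspace (perp n X)"
  by (rule subspaceI2) (auto simp: perp_def om_add1 intro: Z.subspace_add[OF Fn_subspace])

lemma pow_Fn: "v \<in> Fn n \<Longrightarrow> mat_pow_vec n W t v \<in> Fn n"
  by (cases t) (simp_all add: mat_pow_Suc mat_vec_Fn)

lemma span_gen_inv:
  assumes "x \<in> Z.span {mat_pow_vec n W t v | t v. v \<in> Vsites n S}"
  shows "mat_vec n W x \<in> Z.span {mat_pow_vec n W t v | t v. v \<in> Vsites n S}"
  using assms
proof (induct rule: Z.span_induct)
  case base
  show ?case
    by (rule subspaceI2) (auto simp: mat_vec_add intro: Z.span_zero Z.span_add)
next
  case (step x)
  then obtain t v where "x = mat_pow_vec n W t v" "v \<in> Vsites n S" by blast
  then have "mat_vec n W x = mat_pow_vec n W (Suc t) v" by (simp add: mat_pow_Suc)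
  then show ?case using \<open>v \<in> Vsites n S\<close> by (auto intro!: Z.span_base)
qed

lemma pow_in: "(\<And>x. x \<in> X \<Longrightarrow> mat_vec n W x \<in> X) \<Longrightarrow> x \<in> X \<Longrightarrow> mat_pow_vec n W t x \<in> X"
  by (induct t) (simp_all add: mat_pow_Suc)

lemma perp_inv:
  assumes S: "symplectic n W" and XF: "X \<subseteq> Fn n"
    and inv: "\<And>x. x \<in> X \<Longrightarrow> mat_vec n W x \<in> X"
    and x: "x \<in> perp n X"
  shows "mat_vec n W x \<in> perp n X"
proof -
  have fin: "finite X" using XF Fn_finite by (rule finite_subset)
  have img: "mat_vec n W ` X = X"
    using endo_inj_surj[OF fin _ inj_on_subset[OF Mv_inj[OF S] XF]] inv by blast
  have "om n (mat_vec n W x) y = 0" if y: "y \<in> X" for y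
  proof -
    obtain y' where y': "y' \<in> X" "y = mat_vec n W y'" using y img by blast
    have "om n (mat_vec n W x) y = om n x y'" using y' XF om_inv[OF S] by auto
    also have "\<dots> = 0" using x y' by (auto simp: perp_def)
    finally show ?thesis .
  qed
  then show ?thesis by (auto simp: perp_def mat_vec_Fn)
qed

lemma site_eq_iff: "site k = a + 1 \<longleftrightarrow> k = 2*a \<or> k = 2*a+1"
  unfolding site_def by presburger

lemma VC_repr:
  assumes v: "v \<in> Vsites n {a+1}" shows "v = mk a (v (2*a)) (v (2*a+1))"
proof (rule ext)
  fix k show "v k = mk a (v (2*a)) (v (2*a+1)) k"
  proof (cases "k = 2*a \<or> k = 2*a+1")
    case True then show ?thesis by (auto simp: mk_def)
  next
    case False
    then have "site k \<noteq> a+1" using site_eq_iff[of k a] by blast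
    then have "v k = 0" using v unfolding Vsites_iff by auto
    then show ?thesis using False by (simp add: mk_def)
  qed
qed

lemma mk_in: "a < n \<Longrightarrow> mk a x y \<in> Vsites n {a+1}"
  by (auto simp: mk_def Vsites_iff site_def)

lemma mk_eq: "mk a x y = mk a x' y' \<longleftrightarrow> x = x' \<and> y = y'"
proof
  assume h: "mk a x y = mk a x' y'"
  have "x = x'" using fun_cong[OF h, of "2*a"] by (simp add: mk_def)
  moreover have "y = y'" using fun_cong[OF h, of "2*a+1"] by (simp add: mk_def)
  ultimately show "x = x' \<and> y = y'" ..
qed simp

lemma mk_add: "mk a x y + mk a x' y' = mk a (x + x') (y + y')"
  by (auto simp: mk_def fun_eq_iff)

lemma mk_zero: "0 = mk a 0 0"
  by (auto simp: mk_def fun_eq_iff)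

lemma om_mk:
  assumes a: "a < n"
  shows "om n (mk a x y) (mk a x' y') = x * y' + y * x'"
proof -
  have "om n (mk a x y) (mk a x' y') =
    (\<Sum>k<2*n. (if k = 2*a then x * y' else 0) + (if k = 2*a+1 then y * x' else 0))"
    unfolding om_def by (rule sum.cong[OF refl]) (auto simp: mk_def pt_def)
  also have "\<dots> = x * y' + y * x'"
    using a by (simp add: sum.distrib sum_single)
  finally show ?thesis .
qed

lemma om_proj:
  assumes g: "g \<in> Vsites n {a+1}"
  shows "om n b g = om n (proj_sites n {a+1} b) g"
  unfolding om_def
proof (rule sum.cong[OF refl])
  fix k assume k: "k \<in> {..<2*n}"
  show "b k * g (pt k) = proj_sites n {a+1} b k * g (pt k)"
  proof (cases "g (pt k) = 0")
    case False
    then have "site (pt k) = a+1" using g unfolding Vsites_iff by blast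
    then have "site k = a+1" by simp
    then show ?thesis using k by (simp add: proj_sites_def)
  qed simp
qed

lemma bit01: "(x::bit) = 0 \<or> x = 1"
  using bit_not_zero_iff by blast

lemma comb1:
  fixes g0 g1 c0 c1 :: bit
  assumes "\<not> (g0 = 0 \<and> g1 = 0)" "c0 * g1 + c1 * g0 = (0::bit)"
  shows "(c0 = 0 \<and> c1 = 0) \<or> (c0 = g0 \<and> c1 = g1)"
  using assms bit01[of c0] bit01[of c1] bit01[of g0] bit01[of g1] by auto

lemma comb2:
  fixes g0 g1 c0 c1 h0 h1 :: bit
  assumes "\<not> (g0 = 0 \<and> g1 = 0)" "\<not> (c0 = 0 \<and> c1 = 0)" "\<not> (c0 = g0 \<and> c1 = g1)"
  shows "(h0 = 0 \<and> h1 = (0::bit)) \<or> (h0 = c0 \<and> h1 = c1) \<or> (h0 = g0 \<and> h1 = g1)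
     \<or> (h0 = c0 + g0 \<and> h1 = c1 + g1)"
  using assms bit01[of c0] bit01[of c1] bit01[of g0] bit01[of g1] bit01[of h0] bit01[of h1]
  by auto

lemma proj_in: "proj_sites n S y \<in> Vsites n S"
  by (auto simp: proj_sites_def Vsites_def)

lemma proj_split:
  assumes y: "y \<in> Vsites n (L \<union> C)" and d: "L \<inter> C = {}"
  shows "y = proj_sites n L y + proj_sites n C y"
  using y d by (auto simp: proj_sites_def Vsites_def fun_eq_iff)



lemma VC_three:
  assumes a: "a < n" and c: "c \<in> Vsites n {a+1}" and g: "g \<in> Vsites n {a+1}"
    and h: "h \<in> Vsites n {a+1}" and c0: "c \<noteq> 0" and g0: "g \<noteq> 0" and cg: "c \<noteq> g"
  shows "h = 0 \<or> h = c \<or> h = g \<or> h = c + g"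
proof -
  have ce: "c = mk a (c (2*a)) (c (2*a+1))" by (rule VC_repr[OF c])
  have ge: "g = mk a (g (2*a)) (g (2*a+1))" by (rule VC_repr[OF g])
  have he: "h = mk a (h (2*a)) (h (2*a+1))" by (rule VC_repr[OF h])
  have "\<not> (g (2*a) = 0 \<and> g (2*a+1) = 0)" using g0 ge mk_zero by metis
  moreover have "\<not> (c (2*a) = 0 \<and> c (2*a+1) = 0)" using c0 ce mk_zero by metis
  moreover have "\<not> (c (2*a) = g (2*a) \<and> c (2*a+1) = g (2*a+1))" using cg ce ge by metis
  ultimately have "(h (2*a) = 0 \<and> h (2*a+1) = 0) \<or> (h (2*a) = c (2*a) \<and> h (2*a+1) = c (2*a+1))
     \<or> (h (2*a) = g (2*a) \<and> h (2*a+1) = g (2*a+1))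
     \<or> (h (2*a) = c (2*a) + g (2*a) \<and> h (2*a+1) = c (2*a+1) + g (2*a+1))"
    by (rule comb2)
  then show ?thesis
  proof (elim disjE)
    assume "h (2*a) = 0 \<and> h (2*a+1) = 0" then show ?thesis using he mk_zero by metis
  next
    assume "h (2*a) = c (2*a) \<and> h (2*a+1) = c (2*a+1)" then show ?thesis using he ce by metis
  next
    assume "h (2*a) = g (2*a) \<and> h (2*a+1) = g (2*a+1)" then show ?thesis using he ge by metis
  next
    assume "h (2*a) = c (2*a) + g (2*a) \<and> h (2*a+1) = c (2*a+1) + g (2*a+1)"
    then have "h = mk a (c (2*a)) (c (2*a+1)) + mk a (g (2*a)) (g (2*a+1))"
      using he by (simp add: mk_add)
    then show ?thesis using ce ge by metis
  qed
qed

lemma VC_orth: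
  assumes a: "a < n" and c: "c \<in> Vsites n {a+1}" and g: "g \<in> Vsites n {a+1}"
    and g0: "g \<noteq> 0" and o: "om n c g = 0"
  shows "c = 0 \<or> c = g"
proof -
  have ce: "c = mk a (c (2*a)) (c (2*a+1))" by (rule VC_repr[OF c])
  have ge: "g = mk a (g (2*a)) (g (2*a+1))" by (rule VC_repr[OF g])
  have "\<not> (g (2*a) = 0 \<and> g (2*a+1) = 0)" using g0 ge mk_zero by metis
  moreover have "c (2*a) * g (2*a+1) + c (2*a+1) * g (2*a) = 0"
    using o om_mk[OF a] ce ge by metis
  ultimately have "(c (2*a) = 0 \<and> c (2*a+1) = 0) \<or> (c (2*a) = g (2*a) \<and> c (2*a+1) = g (2*a+1))"
    by (rule comb1)
  then show ?thesis using ce ge mk_zero by metis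
qed

lemma dim_two: "g \<noteq> 0 \<Longrightarrow> Z.dim {0, g} = 1"
proof -
  assume g: "g \<noteq> 0"
  have ind: "Z.independent {g}"
    by (rule Z.independent_insertI) (use g Z.independent_empty in auto)
  show ?thesis
    by (rule Z.dim_unique[of "{g}"]) (use g in \<open>auto intro: Z.span_zero Z.span_base ind\<close>)
qed



theorem lemma6:
  fixes n a :: nat and W :: pmat
  assumes "n \<ge> 3"
    and "1 \<le> a" and "a + 2 \<le> n"
    and "symplectic n W"
    and "irreducible_1_wall n W {1..a} {a+1}"
  shows "G_internal n W {1..a} {a+1} = G_internal n W {a+2..n} {a+1}
         \<and> vector_space.dim scaleZ2 (G_internal n W {1..a} {a+1}) = 1"
proof -
  note S = assms(4)
  define L where "L = {1..a}"
  define C where "C = {a+1}"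
  define R where "R = {a+2..n}"
  define SL where "SL = {mat_pow_vec n W t v | t v. v \<in> Vsites n L}"
  define SR where "SR = {mat_pow_vec n W t v | t v. v \<in> Vsites n R}"
  define A where "A = Z.span SL"
  define B where "B = Z.span SR"
  have GL: "G_internal n W L C = proj_sites n C ` A" by (simp add: G_internal_def A_def SL_def)
  have GR: "G_internal n W R C = proj_sites n C ` B" by (simp add: G_internal_def B_def SR_def)
  have an: "a < n" using assms by simp
  have dLC: "L \<inter> C = {}" by (auto simp: L_def C_def)
  have dR: "R \<inter> (L \<union> C) = {}" "(L \<union> C) \<inter> R = {}" by (auto simp: L_def C_def R_def)
  have sites: "site k \<in> L \<or> site k \<in> C \<or> site k \<in> R" if "k < 2*n" for k
    using that by (auto simp: L_def C_def R_def site_def)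
  have lw: "left_wall n W L C" and irr1: "\<not> (\<forall>t\<ge>1. mat_pow_vec n W t ` Vsites n L \<subseteq> Vsites n L)"
    and irr2: "\<not> (\<forall>t\<ge>1. mat_pow_vec n W t ` Vsites n (L \<union> C) \<subseteq> Vsites n (L \<union> C))"
    using assms(5) by (simp_all add: irreducible_1_wall_def L_def C_def)
  have VL_A: "Vsites n L \<subseteq> A"
  proof
    fix v assume "v \<in> Vsites n L"
    then have "mat_pow_vec n W 0 v \<in> SL" unfolding SL_def by blast
    then show "v \<in> A" unfolding A_def by (simp add: Z.span_base)
  qed
  have A_LC: "A \<subseteq> Vsites n (L \<union> C)"
    unfolding A_def
  proof (rule span_in_subspace[OF _ Vsites_subspace])
    show "SL \<subseteq> Vsites n (L \<union> C)"
    proof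
      fix x assume "x \<in> SL"
      then obtain t v where x: "x = mat_pow_vec n W t v" and v: "v \<in> Vsites n L" unfolding SL_def by blast
      show "x \<in> Vsites n (L \<union> C)"
      proof (cases t)
        case 0 then show ?thesis using x v Vsites_mono[of L "L \<union> C" n] by auto
      next
        case (Suc s) then show ?thesis using x v lw unfolding left_wall_def by auto
      qed
    qed
  qed
  have A_inv: "mat_vec n W x \<in> A" if "x \<in> A" for x
    using span_gen_inv[of x n W L] that unfolding A_def SL_def by blast
  have A_F: "A \<subseteq> Fn n" using A_LC Vsites_Fn by blast
  have projC_A: "proj_sites n C y \<in> A" if y: "y \<in> A" for y
  proof -
    have e: "y = proj_sites n L y + proj_sites n C y"
      using proj_split[OF _ dLC] y A_LC by blast
    have "proj_sites n C y = y + proj_sites n L y"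
      by (subst e) (simp add: algebra_simps)
    moreover have "proj_sites n L y \<in> A" using VL_A proj_in by blast
    ultimately show ?thesis using y by (simp add: Z.span_add A_def)
  qed
  obtain t v where t: "t \<ge> 1" and v: "v \<in> Vsites n L" and yn: "mat_pow_vec n W t v \<notin> Vsites n L"
    using irr1 by blast
  define y where "y = mat_pow_vec n W t v"
  have yA: "y \<in> A" unfolding y_def A_def SL_def using v by (blast intro: Z.span_base)
  define g where "g = proj_sites n C y"
  have gA: "g \<in> A" unfolding g_def by (rule projC_A[OF yA])
  have gC: "g \<in> Vsites n C" unfolding g_def by (rule proj_in)
  have g0: "g \<noteq> 0"
  proof
    assume "g = 0"
    then have "y = proj_sites n L y" using proj_split[OF _ dLC, of y n] yA A_LC g_def by auto
    then have "y \<in> Vsites n L" using proj_in by metis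
    then show False using yn y_def by simp
  qed
  have LC_notin: "\<not> Vsites n (L \<union> C) \<subseteq> A"
  proof
    assume sub: "Vsites n (L \<union> C) \<subseteq> A"
    have "\<forall>t\<ge>1. mat_pow_vec n W t ` Vsites n (L \<union> C) \<subseteq> Vsites n (L \<union> C)"
    proof (intro allI impI subsetI)
      fix s x assume "x \<in> mat_pow_vec n W s ` Vsites n (L \<union> C)"
      then obtain z where "z \<in> Vsites n (L \<union> C)" "x = mat_pow_vec n W s z" by blast
      then have "x \<in> A" using sub pow_in[of A n W] A_inv by blast
      then show "x \<in> Vsites n (L \<union> C)" using A_LC by blast
    qed
    then show False using irr2 by blast
  qed
  have C_eq: "C = {a+1}" by (simp add: C_def)
  have GL_eq: "proj_sites n C ` A = {0, g}"
  proof
    show "{0, g} \<subseteq> proj_sites n C ` A"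
    proof -
      have "0 \<in> A" unfolding A_def by (rule Z.span_zero)
      then have "proj_sites n C 0 \<in> proj_sites n C ` A" by (rule imageI)
      then have "0 \<in> proj_sites n C ` A" by simp
      moreover have "g \<in> proj_sites n C ` A" unfolding g_def using yA by (rule imageI)
      ultimately show ?thesis by blast
    qed
  next
    show "proj_sites n C ` A \<subseteq> {0, g}"
    proof
      fix c assume "c \<in> proj_sites n C ` A"
      then obtain z where z: "z \<in> A" "c = proj_sites n C z" by blast
      have cA: "c \<in> A" using z projC_A by simp
      have cC: "c \<in> Vsites n C" using z proj_in by simp
      show "c \<in> {0, g}"
      proof (rule ccontr)
        assume "c \<notin> {0, g}"
        then have c0: "c \<noteq> 0" and cg: "c \<noteq> g" by auto
        have "Vsites n (L \<union> C) \<subseteq> A"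
        proof
          fix x assume x: "x \<in> Vsites n (L \<union> C)"
          have e: "x = proj_sites n L x + proj_sites n C x" by (rule proj_split[OF x dLC])
          have "proj_sites n L x \<in> A" using VL_A proj_in by blast
          moreover have "proj_sites n C x \<in> A"
          proof -
            have "proj_sites n C x = 0 \<or> proj_sites n C x = c \<or> proj_sites n C x = g
                  \<or> proj_sites n C x = c + g"
              using VC_three[OF an] cC gC proj_in c0 g0 cg unfolding C_eq by blast
            then show ?thesis using cA gA Z.span_zero[of SL] Z.span_add[of c SL g] A_def by auto
          qed
          ultimately show "x \<in> A" using e Z.span_add[of _ SL] A_def by metis
        qed
        then show False using LC_notin by blast
      qed
    qed
  qed
  define Q where "Q = perp n A"
  have VR_Q: "Vsites n R \<subseteq> Q"
  proof
    fix r assume r: "r \<in> Vsites n R"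
    have "om n r z = 0" if "z \<in> A" for z using om_disj[OF r _ dR(1)] that A_LC by blast
    then show "r \<in> Q" using r Vsites_Fn unfolding Q_def perp_def by blast
  qed
  have Q_inv: "mat_vec n W x \<in> Q" if "x \<in> Q" for x
    using perp_inv[OF S A_F A_inv] that unfolding Q_def by blast
  have B_Q: "B \<subseteq> Q"
    unfolding B_def
  proof (rule span_in_subspace)
    show "Z.subspace Q" unfolding Q_def by (rule perp_subspace)
    show "SR \<subseteq> Q" unfolding SR_def using VR_Q pow_in[of Q n W] Q_inv by blast
  qed
  have B_proj: "proj_sites n C b = 0 \<or> proj_sites n C b = g" if b: "b \<in> B" for b
  proof -
    have "om n b g = 0" using b B_Q gA unfolding Q_def perp_def by blast
    then have "om n (proj_sites n C b) g = 0" using om_proj[of g n a b] gC unfolding C_eq by simp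
    then show ?thesis using VC_orth[OF an] proj_in gC g0 unfolding C_eq by blast
  qed
  have B_L: "b k = 0" if b: "b \<in> B" and k: "k < 2*n" "site k \<in> L" for b k
  proof -
    have "ev (pt k) \<in> A" using VL_A ev_in[of "pt k" n L] k pt_lt by auto
    then have "om n b (ev (pt k)) = 0" using b B_Q unfolding Q_def perp_def by blast
    then show ?thesis using om_e[OF pt_lt[OF k(1)]] by simp
  qed
  have B0: "0 \<in> B" unfolding B_def by (rule Z.span_zero)
  have gB: "g \<in> proj_sites n C ` B"
  proof (rule ccontr)
    assume ng: "g \<notin> proj_sites n C ` B"
    have B_R: "B \<subseteq> Vsites n R"
    proof
      fix b assume b: "b \<in> B"
      have pb: "proj_sites n C b = 0" using B_proj[OF b] ng b by auto
      have bF: "b \<in> Fn n" using b B_Q unfolding Q_def perp_def by blast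
      show "b \<in> Vsites n R"
        unfolding Vsites_iff
      proof (intro allI impI)
        fix k assume bk: "b k \<noteq> 0"
        have k: "k < 2*n"
        proof (rule ccontr)
          assume "\<not> k < 2*n" then have "b k = 0" using bF by (simp add: Fn_def)
          with bk show False by simp
        qed
        have "site k \<notin> L" using B_L[OF b k] bk by blast
        moreover have "site k \<notin> C" using fun_cong[OF pb, of k] bk k by (auto simp: proj_sites_def)
        ultimately show "k < 2*n \<and> site k \<in> R" using sites[OF k] k by blast
      qed
    qed
    have VR_inv: "mat_vec n W r \<in> Vsites n R" if r: "r \<in> Vsites n R" for r
    proof -
      have "mat_pow_vec n W 1 r \<in> SR" unfolding SR_def using r by blast
      then have "mat_pow_vec n W 1 r \<in> B" unfolding B_def by (rule Z.span_base)
      then have "mat_vec n W r \<in> B" by (simp add: mat_pow_Suc)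
      then show ?thesis using B_R by blast
    qed
    have P_eq: "perp n (Vsites n R) = Vsites n (L \<union> C)"
    proof
      show "Vsites n (L \<union> C) \<subseteq> perp n (Vsites n R)"
        unfolding perp_def using om_disj[OF _ _ dR(2)] Vsites_Fn by blast
    next
      show "perp n (Vsites n R) \<subseteq> Vsites n (L \<union> C)"
      proof
        fix x assume x: "x \<in> perp n (Vsites n R)"
        have xF: "x \<in> Fn n" using x unfolding perp_def by blast
        show "x \<in> Vsites n (L \<union> C)"
          unfolding Vsites_iff
        proof (intro allI impI)
          fix k assume xk: "x k \<noteq> 0"
          have k: "k < 2*n"
        proof (rule ccontr)
          assume "\<not> k < 2*n" then have "x k = 0" using xF by (simp add: Fn_def)
          with xk show False by simp
        qed
          have "site k \<notin> R"
          proof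
            assume "site k \<in> R"
            then have "ev (pt k) \<in> Vsites n R" using ev_in[of "pt k" n R] k pt_lt by auto
            then have "om n x (ev (pt k)) = 0" using x unfolding perp_def by blast
            then show False using om_e[OF pt_lt[OF k]] xk by simp
          qed
          then show "k < 2*n \<and> site k \<in> L \<union> C" using sites[OF k] k by blast
        qed
      qed
    qed
    have LC_inv: "mat_vec n W x \<in> Vsites n (L \<union> C)" if "x \<in> Vsites n (L \<union> C)" for x
      using perp_inv[OF S Vsites_Fn VR_inv] that unfolding P_eq by blast
    have "\<forall>t\<ge>1. mat_pow_vec n W t ` Vsites n (L \<union> C) \<subseteq> Vsites n (L \<union> C)"
      using pow_in[of "Vsites n (L \<union> C)" n W] LC_inv by blast
    then show False using irr2 by blast
  qed
  have GR_eq: "proj_sites n C ` B = {0, g}"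
    using B_proj gB B0 proj_zero by force
  show ?thesis
    using GL GR GL_eq GR_eq dim_two[OF g0] unfolding L_def C_def R_def by simp
qed


end
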